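(* Let $(p_k)_{k\in\mathbb N}$ be a probability distribution on $\mathbb N$ with $p_k>0$ for infinitely many $k$, let $\rho(t):=\#\{k\in\mathbb N:p_k\ge t^{-1}\}$ for $t>0$, and let $g$ be a function slowly varying at $\infty$. The following are equivalent: (a) $\sum_{k\ge1}p_k\mathbf 1_{\{p_k\le t\}}\sim t\,g(1/t)$ as $t\to0+$; (b) for all $\lambda>0$, $\lim_{t\to\infty}\frac{\rho(\lambda t)-\rho(t)}{g(t)}=\log\lambda$. *)

theory Defs
  imports "HOL-Analysis.Analysis" "HOL-Library.Landau_Symbols"
begin

definition slowly_varying :: "(real \<Rightarrow> real) \<Rightarrow> bool" where
  "slowly_varying g \<longleftrightarrow>
     g \<in> borel_measurable borel \<and>
     (\<forall>\<^sub>F x in at_top. g x > 0) \<and>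
     (\<forall>lam>0. ((\<lambda>x. g (lam * x) / g x) \<longlongrightarrow> 1) at_top)"

definition rho :: "(nat \<Rightarrow> real) \<Rightarrow> real \<Rightarrow> nat" where
  "rho p t = card {k. 1 \<le> k \<and> p k \<ge> inverse t}"

end

theory Submission
  imports Defs
begin


locale pd =
  fixes p :: "nat \<Rightarrow> real"
  assumes nonneg: "\<forall>k\<ge>1. p k \<ge> 0"
    and prob: "(p has_sum 1) {1..}"
begin

definition Gs :: "real \<Rightarrow> real" where
  "Gs a = infsum p {k. 1 \<le> k \<and> p k < a}"
definition Fs :: "real \<Rightarrow> real" where
  "Fs a = infsum p {k. 1 \<le> k \<and> p k \<le> a}"

lemma summ: "A \<subseteq> {1..} \<Longrightarrow> p summable_on A"
  by (rule summable_on_subset_banach[OF has_sum_imp_summable[OF prob]])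

lemma infsum_le1: "A \<subseteq> {1..} \<Longrightarrow> infsum p A \<le> 1"
proof -
  assume A: "A \<subseteq> {1..}"
  have "infsum p A \<le> infsum p {1..}"
    by (rule infsum_mono_neutral) (use A summ[of A] summ[of "{1..}"] nonneg in auto)
  also have "\<dots> = 1" using prob infsumI by blast
  finally show ?thesis .
qed

lemma infsum_ge0: "A \<subseteq> {1..} \<Longrightarrow> infsum p A \<ge> 0"
  by (rule infsum_nonneg) (use nonneg in auto)

lemma infsum_sub: "A \<subseteq> B \<Longrightarrow> B \<subseteq> {1..} \<Longrightarrow> infsum p A \<le> infsum p B"
proof (rule infsum_mono_neutral)
  assume AB: "A \<subseteq> B" "B \<subseteq> {1..}"
  show "p summable_on A" "p summable_on B" using summ AB by auto
  show "\<And>x. x \<in> A \<inter> B \<Longrightarrow> p x \<le> p x" by simp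
  show "\<And>x. x \<in> A - B \<Longrightarrow> p x \<le> 0" using AB by auto
  show "\<And>x. x \<in> B - A \<Longrightarrow> 0 \<le> p x" using AB nonneg by auto
qed

lemma finite_level: assumes b: "b > 0" shows "finite {k. 1 \<le> k \<and> p k \<ge> b}"
proof (rule ccontr)
  let ?S = "{k. 1 \<le> k \<and> p k \<ge> b}"
  assume "infinite ?S"
  obtain n :: nat where n: "real n > 1 / b" using reals_Archimedean2 by blast
  obtain B where B: "finite B" "card B = n" "B \<subseteq> ?S"
    using \<open>infinite ?S\<close> infinite_arbitrarily_large by blast
  have "real n * b = (\<Sum>k\<in>B. b)" using B by simp
  also have "\<dots> \<le> sum p B" by (rule sum_mono) (use B in auto)
  also have "\<dots> = infsum p B" using B by simp
  also have "\<dots> \<le> 1" by (rule infsum_le1) (use B in auto)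
  finally have "real n * b \<le> 1" .
  moreover have "1 < real n * b" using n b by (simp add: divide_less_eq)
  ultimately show False by linarith
qed

lemma rho_eq: "t > 0 \<Longrightarrow> rho p t = card {k. 1 \<le> k \<and> p k \<ge> 1 / t}"
  by (simp add: rho_def divide_inverse)

lemma band_finite: "b > 0 \<Longrightarrow> finite {k. 1 \<le> k \<and> b \<le> p k \<and> p k < a}"
  by (rule finite_subset[OF _ finite_level[of b]]) auto

lemma rho_diff:
  assumes "0 < x" "x \<le> y"
  shows "real (rho p y) - real (rho p x) = real (card {k. 1 \<le> k \<and> 1/y \<le> p k \<and> p k < 1/x})"
proof -
  have y: "y > 0" using assms by simp
  have e: "{k. 1 \<le> k \<and> p k \<ge> 1 / y} = {k. 1 \<le> k \<and> p k \<ge> 1 / x} \<union> {k. 1 \<le> k \<and> 1/y \<le> p k \<and> p k < 1/x}"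
  proof -
    have "1/y \<le> 1/x" using assms by (simp add: frac_le)
    then show ?thesis by auto
  qed
  have "card {k. 1 \<le> k \<and> p k \<ge> 1 / y} = card {k. 1 \<le> k \<and> p k \<ge> 1 / x} + card {k. 1 \<le> k \<and> 1/y \<le> p k \<and> p k < 1/x}"
    unfolding e by (rule card_Un_disjoint) (use assms y finite_level band_finite in auto)
  then show ?thesis using assms y by (simp add: rho_eq)
qed

lemma Gs_diff:
  assumes "0 < b" "b \<le> a"
  shows "Gs a - Gs b = sum p {k. 1 \<le> k \<and> b \<le> p k \<and> p k < a}"
proof -
  have e: "{k. 1 \<le> k \<and> p k < a} = {k. 1 \<le> k \<and> p k < b} \<union> {k. 1 \<le> k \<and> b \<le> p k \<and> p k < a}"
    using assms by auto
  have "Gs a = Gs b + infsum p {k. 1 \<le> k \<and> b \<le> p k \<and> p k < a}"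
    unfolding Gs_def e by (rule infsum_Un_disjoint) (auto intro: summ)
  then show ?thesis using band_finite[OF assms(1)] by simp
qed

definition V :: "real \<Rightarrow> real" where "V x = Gs (1 / x)"
definition D :: "real \<Rightarrow> real \<Rightarrow> real" where "D x y = real (rho p y) - real (rho p x)"

lemma V_D_bounds:
  assumes "0 < x" "x \<le> y"
  shows "D x y / y \<le> V x - V y" "V x - V y \<le> D x y / x"
proof -
  let ?S = "{k. 1 \<le> k \<and> 1/y \<le> p k \<and> p k < 1/x}"
  have y: "y > 0" using assms by simp
  have VD: "V x - V y = sum p ?S" unfolding V_def
    by (rule Gs_diff) (use assms y in \<open>auto simp: field_simps\<close>)
  have DD: "D x y = card ?S" unfolding D_def using rho_diff[OF assms] .
  have "D x y / y = (\<Sum>k\<in>?S. 1/y)" using DD by simp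
  also have "\<dots> \<le> sum p ?S" by (rule sum_mono) auto
  finally show "D x y / y \<le> V x - V y" using VD by simp
  have "sum p ?S \<le> (\<Sum>k\<in>?S. 1/x)" by (rule sum_mono) auto
  also have "\<dots> = D x y / x" using DD by simp
  finally show "V x - V y \<le> D x y / x" using VD by simp
qed

lemma D_nonneg: "0 < x \<Longrightarrow> x \<le> y \<Longrightarrow> D x y \<ge> 0"
  using rho_diff unfolding D_def by simp

lemma V_nonneg: "V x \<ge> 0"
  unfolding V_def Gs_def by (rule infsum_ge0) auto

lemma V_le_Fs: "V x \<le> Fs (1/x)"
  unfolding V_def Gs_def Fs_def by (rule infsum_sub) auto

lemma Fs_le_V: "0 < a \<Longrightarrow> a < a' \<Longrightarrow> Fs a \<le> Gs a'"
  unfolding Gs_def Fs_def by (rule infsum_sub) auto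

end


context pd begin

lemma Gs_mono: "a \<le> a' \<Longrightarrow> Gs a \<le> Gs a'"
  unfolding Gs_def by (rule infsum_sub) auto

lemma Gs_small:
  assumes e: "e > 0" shows "\<exists>a>0. Gs a \<le> e"
proof -
  have "\<forall>\<^sub>F K in finite_subsets_at_top {1..}. dist (sum p K) 1 < e"
    using prob e unfolding has_sum_def tendsto_iff by blast
  then obtain K where K: "finite K" "K \<subseteq> {1..}" "dist (sum p K) 1 < e"
    unfolding eventually_finite_subsets_at_top by blast
  define K' where "K' = {k\<in>K. p k > 0}"
  have K'f: "finite K'" using K by (simp add: K'_def)
  have sK: "sum p K' = sum p K"
    unfolding K'_def by (rule sum.mono_neutral_left) (use K nonneg in \<open>auto simp: less_le\<close>)
  define a where "a = (if K' = {} then 1 else Min (p ` K'))"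
  have apos: "a > 0"
    using K'f by (auto simp: a_def K'_def)
  have aK: "\<And>k. k \<in> K' \<Longrightarrow> a \<le> p k"
    using K'f by (auto simp: a_def)
  have disj: "{k. 1 \<le> k \<and> p k < a} \<inter> K' = {}"
  proof -
    { fix k assume "k \<in> {k. 1 \<le> k \<and> p k < a}" "k \<in> K'"
      then have False using aK[of k] by simp }
    then show ?thesis by blast
  qed
  have "Gs a + sum p K' = infsum p ({k. 1 \<le> k \<and> p k < a} \<union> K')"
    unfolding Gs_def using K'f disj
    by (subst infsum_Un_disjoint) (use K K'_def in \<open>auto intro!: summ\<close>)
  also have "\<dots> \<le> 1" by (rule infsum_le1) (use K K'_def in auto)
  finally have "Gs a \<le> 1 - sum p K" using sK by simp
  moreover have "1 - sum p K < e" using K(3) by (simp add: dist_real_def)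
  ultimately show ?thesis using apos by (intro exI[of _ a]) auto
qed

lemma V_small: "e > 0 \<Longrightarrow> \<forall>\<^sub>F x in at_top. V x \<le> e"
proof -
  assume "e > 0"
  then obtain a where a: "a > 0" "Gs a \<le> e" using Gs_small by blast
  show ?thesis unfolding eventually_at_top_linorder
  proof (intro exI[of _ "1/a"] allI impI)
    fix x assume "x \<ge> 1/a"
    have ia: "1/a > 0" using a by simp
    have xp: "x > 0" using ia \<open>x \<ge> 1/a\<close> by linarith
    have "1/x \<le> 1/(1/a)" by (rule divide_left_mono) (use ia xp \<open>x \<ge> 1/a\<close> in auto)
    then have "1/x \<le> a" by simp
    then show "V x \<le> e" unfolding V_def using Gs_mono a by (meson order.trans)
  qed
qed

lemma F_eq: "infsum (\<lambda>k. if p k \<le> t then p k else 0) {1..} = Fs t"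
  unfolding Fs_def by (rule infsum_cong_neutral) auto

end

lemma tendsto_by_eps:
  fixes f :: "real \<Rightarrow> real"
  assumes "\<And>e. e > 0 \<Longrightarrow> \<forall>\<^sub>F x in F. f x \<le> c + e"
      and "\<And>e. e > 0 \<Longrightarrow> \<forall>\<^sub>F x in F. f x \<ge> c - e"
  shows "(f \<longlongrightarrow> c) F"
proof (rule tendstoI)
  fix e :: real assume e: "e > 0"
  have "\<forall>\<^sub>F x in F. f x \<le> c + e/2 \<and> f x \<ge> c - e/2"
    using assms e by (intro eventually_conj) auto
  then show "\<forall>\<^sub>F x in F. dist (f x) c < e"
    by eventually_elim (use e in \<open>auto simp: dist_real_def\<close>)
qed

lemma tendsto_by_eps1:
  fixes f :: "real \<Rightarrow> real"
  assumes "\<And>e. e > 0 \<Longrightarrow> e < 1 \<Longrightarrow> \<forall>\<^sub>F x in F. f x \<le> c + e"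
      and "\<And>e. e > 0 \<Longrightarrow> e < 1 \<Longrightarrow> \<forall>\<^sub>F x in F. f x \<ge> c - e"
  shows "(f \<longlongrightarrow> c) F"
proof (rule tendsto_by_eps)
  fix e :: real assume e: "e > 0"
  have "\<forall>\<^sub>F x in F. f x \<le> c + min e (1/2)" using assms(1)[of "min e (1/2)"] e by auto
  then show "\<forall>\<^sub>F x in F. f x \<le> c + e" by eventually_elim auto
  have "\<forall>\<^sub>F x in F. f x \<ge> c - min e (1/2)" using assms(2)[of "min e (1/2)"] e by auto
  then show "\<forall>\<^sub>F x in F. f x \<ge> c - e" by eventually_elim auto
qed

lemma sv_pos: "slowly_varying g \<Longrightarrow> \<forall>\<^sub>F x in at_top. g x > 0"
  by (simp add: slowly_varying_def)

lemma sv_ratio: "slowly_varying g \<Longrightarrow> lam > 0 \<Longrightarrow> ((\<lambda>x. g (lam * x) / g x) \<longlongrightarrow> 1) at_top"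
  by (simp add: slowly_varying_def)

lemma sv_geom:
  fixes g :: "real \<Rightarrow> real"
  assumes sv: "slowly_varying g" and mu: "mu \<ge> 1" and d: "d > 0"
  shows "\<exists>x1>0. \<forall>x\<ge>x1. g x > 0 \<and> (\<forall>j::nat. g (mu ^ j * x) \<le> (1 + d) ^ j * g x)"
proof -
  have "\<forall>\<^sub>F x in at_top. g (mu * x) / g x < 1 + d"
    using sv_ratio[OF sv, of mu] mu d by (intro order_tendstoD) auto
  moreover have "\<forall>\<^sub>F x in at_top. g x > 0" using sv_pos[OF sv] .
  moreover have "\<forall>\<^sub>F x::real in at_top. x \<ge> 1" by (rule eventually_ge_at_top)
  ultimately have "\<forall>\<^sub>F x in at_top. g x > 0 \<and> g (mu * x) \<le> (1 + d) * g x \<and> x \<ge> 1"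
    by eventually_elim (auto simp: divide_less_eq)
  then obtain x1 where x1: "\<And>x. x \<ge> x1 \<Longrightarrow> g x > 0 \<and> g (mu * x) \<le> (1 + d) * g x \<and> x \<ge> 1"
    unfolding eventually_at_top_linorder by blast
  have x1p: "x1 > 0" using x1[of x1] by simp
  have "\<forall>x\<ge>x1. g x > 0 \<and> (\<forall>j::nat. g (mu ^ j * x) \<le> (1 + d) ^ j * g x)"
  proof (intro allI impI conjI)
    fix x assume x: "x \<ge> x1"
    show "g x > 0" using x1[OF x] by simp
    fix j :: nat
    show "g (mu ^ j * x) \<le> (1 + d) ^ j * g x"
    proof (induction j)
      case 0 then show ?case by simp
    next
      case (Suc j)
      have "mu ^ j \<ge> 1" using mu by (simp add: one_le_power)
      then have "mu ^ j * x \<ge> 1 * x" using x x1p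
        by (intro mult_right_mono) auto
      then have "mu ^ j * x \<ge> x" by simp
      then have h: "g (mu * (mu ^ j * x)) \<le> (1 + d) * g (mu ^ j * x)" using x1 x by force
      have "g (mu ^ Suc j * x) = g (mu * (mu ^ j * x))" by (simp add: mult.assoc)
      also have "\<dots> \<le> (1 + d) * g (mu ^ j * x)" by (rule h)
      also have "\<dots> \<le> (1 + d) * ((1 + d) ^ j * g x)"
        using Suc d by (intro mult_left_mono) auto
      finally show ?case by (simp add: mult.assoc)
    qed
  qed
  then show ?thesis using x1p by blast
qed


lemma filterlim_scale: "(c::real) > 0 \<Longrightarrow> filterlim (\<lambda>x. c * x) at_top at_top"
  by (rule filterlim_tendsto_pos_mult_at_top[OF tendsto_const]) (auto simp: filterlim_ident)

lemma tendsto_scale: "(c::real) > 0 \<Longrightarrow> (f \<longlongrightarrow> L) at_top \<Longrightarrow> ((\<lambda>x. f (c * x)) \<longlongrightarrow> L) at_top"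
  using filterlim_compose filterlim_scale by blast

lemma eventually_scale: "(c::real) > 0 \<Longrightarrow> eventually P at_top \<Longrightarrow> eventually (\<lambda>x. P (c * x)) at_top"
  using filterlim_scale filterlim_iff by blast

context pd begin

lemma A1:
  assumes sv: "slowly_varying g"
  shows "(\<lambda>t. infsum (\<lambda>k. if p k \<le> t then p k else 0) {1..}) \<sim>[at_right 0] (\<lambda>t. t * g (1 / t))
     \<longleftrightarrow> ((\<lambda>x. x * Fs (1/x) / g x) \<longlongrightarrow> 1) at_top"
proof -
  have ev: "\<forall>\<^sub>F x in at_top. (if Fs (inverse x) = 0 \<and> inverse x * g (1 / inverse x) = 0 then 1
        else Fs (inverse x) / (inverse x * g (1 / inverse x))) = x * Fs (1/x) / g x"
    using eventually_conj[OF sv_pos[OF sv] eventually_gt_at_top[of 0]]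
  proof eventually_elim
    case (elim x)
    then have gx: "g x > 0" and xp: "x > 0" by auto
    have i: "1 / inverse x = x" by (simp add: inverse_eq_divide)
    have nz: "inverse x * g x \<noteq> 0" using gx xp by simp
    have "Fs (inverse x) / (inverse x * g x) = x * Fs (1/x) / g x"
      using gx xp by (simp add: divide_inverse)
    then show ?case unfolding i using nz by simp
  qed
  show ?thesis
    unfolding F_eq asymp_equiv_def at_right_to_top filterlim_filtermap
    using tendsto_cong[OF ev] by simp
qed

lemma A2:
  assumes sv: "slowly_varying g"
  shows "((\<lambda>x. x * Fs (1/x) / g x) \<longlongrightarrow> 1) at_top \<longleftrightarrow> ((\<lambda>x. x * V x / g x) \<longlongrightarrow> 1) at_top"
proof
  let ?Psi = "\<lambda>x. x * Fs (1/x) / g x"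
  let ?Phi = "\<lambda>x. x * V x / g x"
  have base: "\<forall>\<^sub>F x in at_top. g x > 0 \<and> x > 0"
    using eventually_conj[OF sv_pos[OF sv] eventually_gt_at_top[of 0]] .
  have PhiPsi: "\<forall>\<^sub>F x in at_top. ?Phi x \<le> ?Psi x"
    using base by eventually_elim (auto intro!: divide_right_mono mult_left_mono V_le_Fs)
  {
    assume Psi: "(?Psi \<longlongrightarrow> 1) at_top"
    show "(?Phi \<longlongrightarrow> 1) at_top"
    proof (rule tendsto_by_eps1)
      fix e :: real assume e: "e > 0" "e < 1"
      have "\<forall>\<^sub>F x in at_top. ?Psi x < 1 + e" using Psi e by (intro order_tendstoD) auto
      with PhiPsi show "\<forall>\<^sub>F x in at_top. ?Phi x \<le> 1 + e" by eventually_elim auto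
      define mu where "mu = 1 + e"
      have mu: "mu > 1" using e by (simp add: mu_def)
      have lim: "((\<lambda>x. (1/mu) * ?Psi (mu * x) * (g (mu * x) / g x)) \<longlongrightarrow> (1/mu) * 1 * 1) at_top"
        by (intro tendsto_intros tendsto_scale Psi sv_ratio[OF sv]) (use mu in auto)
      have "1/mu > 1 - e" using e by (simp add: mu_def field_simps)
      then have ev1: "\<forall>\<^sub>F x in at_top. (1/mu) * ?Psi (mu * x) * (g (mu * x) / g x) > 1 - e"
        using lim by (intro order_tendstoD) auto
      have ev2: "\<forall>\<^sub>F x in at_top. g (mu * x) > 0" using eventually_scale[OF _ sv_pos[OF sv], of mu] mu by simp
      show "\<forall>\<^sub>F x in at_top. ?Phi x \<ge> 1 - e"
        using ev1 ev2 base
      proof eventually_elim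
        case (elim x)
        have "Fs (1 / (mu * x)) \<le> Gs (1/x)"
          by (rule Fs_le_V) (use elim mu in \<open>auto simp: field_simps\<close>)
        then have "x * Fs (1 / (mu * x)) / g x \<le> ?Phi x"
          using elim unfolding V_def by (auto intro!: divide_right_mono mult_left_mono)
        moreover have "x * Fs (1 / (mu * x)) / g x = (1/mu) * ?Psi (mu * x) * (g (mu * x) / g x)"
          using elim mu by (simp add: field_simps)
        ultimately show ?case using elim by linarith
      qed
    qed
  }
  {
    assume Phi: "(?Phi \<longlongrightarrow> 1) at_top"
    show "(?Psi \<longlongrightarrow> 1) at_top"
    proof (rule tendsto_by_eps1)
      fix e :: real assume e: "e > 0" "e < 1"
      have "\<forall>\<^sub>F x in at_top. ?Phi x > 1 - e" using Phi e by (intro order_tendstoD) auto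
      with PhiPsi show "\<forall>\<^sub>F x in at_top. ?Psi x \<ge> 1 - e" by eventually_elim auto
      define mu where "mu = 1 + e/2"
      have mu: "mu > 1" using e by (simp add: mu_def)
      have lim: "((\<lambda>x. mu * ?Phi (inverse mu * x) * (g (inverse mu * x) / g x)) \<longlongrightarrow> mu * 1 * 1) at_top"
        by (intro tendsto_intros tendsto_scale Phi sv_ratio[OF sv]) (use mu in auto)
      have "mu < 1 + e" using e by (simp add: mu_def)
      then have ev1: "\<forall>\<^sub>F x in at_top. mu * ?Phi (inverse mu * x) * (g (inverse mu * x) / g x) < 1 + e"
        using lim by (intro order_tendstoD) auto
      have ev2: "\<forall>\<^sub>F x in at_top. g (inverse mu * x) > 0"
        using eventually_scale[OF _ sv_pos[OF sv], of "inverse mu"] mu by simp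
      show "\<forall>\<^sub>F x in at_top. ?Psi x \<le> 1 + e"
        using ev1 ev2 base
      proof eventually_elim
        case (elim x)
        have "Fs (1 / x) \<le> Gs (mu / x)"
          by (rule Fs_le_V) (use elim mu in \<open>auto simp: field_simps\<close>)
        also have "Gs (mu / x) = V (inverse mu * x)" unfolding V_def by (simp add: field_simps)
        finally have "?Psi x \<le> x * V (inverse mu * x) / g x"
          using elim by (auto intro!: divide_right_mono mult_left_mono)
        moreover have "x * V (inverse mu * x) / g x = mu * ?Phi (inverse mu * x) * (g (inverse mu * x) / g x)"
          using elim mu by (simp add: field_simps)
        ultimately show ?case using elim by linarith
      qed
    qed
  }
qed

end


context pd begin

definition R :: "(real \<Rightarrow> real) \<Rightarrow> real \<Rightarrow> real \<Rightarrow> real" where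
  "R g mu y = y * (V y - V (mu * y)) / g y"

lemma D_block:
  assumes "y > 0" "mu \<ge> 1"
  shows "D y (mu * y) \<le> mu * y * (V y - V (mu * y))" "y * (V y - V (mu * y)) \<le> D y (mu * y)"
proof -
  have my: "y \<le> mu * y" using assms mult_right_mono[of 1 mu y] by simp
  have mp: "mu * y > 0" using assms by simp
  have "D y (mu * y) / (mu * y) \<le> V y - V (mu * y)" using V_D_bounds(1)[OF assms(1) my] .
  then show "D y (mu * y) \<le> mu * y * (V y - V (mu * y))" using mp by (simp add: divide_le_eq mult.commute)
  have "V y - V (mu * y) \<le> D y (mu * y) / y" using V_D_bounds(2)[OF assms(1) my] .
  then show "y * (V y - V (mu * y)) \<le> D y (mu * y)" using assms(1) by (simp add: le_divide_eq mult.commute)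
qed

lemma D_telescope: "(\<Sum>j<n. D (mu ^ j * t) (mu * (mu ^ j * t))) = D t (mu ^ n * t)"
proof -
  have "(\<Sum>j<n. D (mu ^ j * t) (mu * (mu ^ j * t))) = (\<Sum>j<n. real (rho p (mu ^ Suc j * t)) - real (rho p (mu ^ j * t)))"
    unfolding D_def by (simp add: mult.assoc)
  also have "\<dots> = real (rho p (mu ^ n * t)) - real (rho p (mu ^ 0 * t))"
    by (rule sum_lessThan_telescope)
  finally show ?thesis by (simp add: D_def)
qed

lemma R_lim:
  assumes sv: "slowly_varying g" and Phi: "((\<lambda>x. x * V x / g x) \<longlongrightarrow> 1) at_top" and mu: "mu > 1"
  shows "((\<lambda>y. R g mu y) \<longlongrightarrow> 1 - 1/mu) at_top"
proof -
  have mu0: "mu > 0" using mu by simp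
  have lim: "((\<lambda>y. y * V y / g y - (1/mu) * ((mu * y) * V (mu * y) / g (mu * y)) * (g (mu * y) / g y))
     \<longlongrightarrow> 1 - (1/mu) * 1 * 1) at_top"
    by (intro tendsto_intros Phi tendsto_scale[OF _ Phi] sv_ratio[OF sv]) (use mu in auto)
  have ev: "\<forall>\<^sub>F y in at_top. y * V y / g y - (1/mu) * ((mu * y) * V (mu * y) / g (mu * y)) * (g (mu * y) / g y) = R g mu y"
    using eventually_conj[OF eventually_scale[OF mu0 sv_pos[OF sv]] eventually_gt_at_top[of 0]]
  proof eventually_elim
    case (elim y)
    then have "g (mu * y) \<noteq> 0" by simp
    then have "(1/mu) * ((mu * y) * V (mu * y) / g (mu * y)) * (g (mu * y) / g y) = y * V (mu * y) / g y"
      using mu elim by (simp add: field_simps)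
    moreover have "y * V y / g y - y * V (mu * y) / g y = y * (V y - V (mu * y)) / g y"
      by (simp add: diff_divide_distrib right_diff_distrib)
    ultimately show ?case unfolding R_def by (simp only:)
  qed
  show ?thesis using Lim_transform_eventually[OF lim ev] by simp
qed

lemma ln_bounds: "(mu::real) > 0 \<Longrightarrow> ln mu \<le> mu - 1 \<and> mu - 1 \<le> mu * ln mu"
proof -
  assume m: "mu > 0"
  have a: "ln mu \<le> mu - 1" using ln_le_minus_one[of mu] m by simp
  have "ln (1/mu) \<le> 1/mu - 1" using m by (intro ln_le_minus_one) auto
  then have "- ln mu \<le> 1/mu - 1" using m by (simp add: ln_div)
  then have "mu * (- ln mu) \<le> mu * (1/mu - 1)" using m by (intro mult_left_mono) auto
  then have "mu - 1 \<le> mu * ln mu" using m by (simp add: algebra_simps)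
  with a show ?thesis by simp
qed

end


lemma pow_ge_self: "(mu::real) \<ge> 1 \<Longrightarrow> t > 0 \<Longrightarrow> mu ^ j * t \<ge> t"
  using mult_right_mono[of 1 "mu ^ j" t] one_le_power[of mu j] by simp

context pd begin

lemma B1_gt1:
  assumes sv: "slowly_varying g" and Phi: "((\<lambda>x. x * V x / g x) \<longlongrightarrow> 1) at_top" and lam: "lam > 1"
  shows "((\<lambda>t. D t (lam * t) / g t) \<longlongrightarrow> ln lam) at_top"
proof (rule tendsto_by_eps)
  fix e :: real assume e: "e > 0"
  have r1: "(\<lambda>n. root n lam) \<longlonglongrightarrow> 1" by (rule LIMSEQ_root_const) (use lam in simp)
  have "(\<lambda>n. root n lam * ln lam) \<longlonglongrightarrow> 1 * ln lam" by (intro tendsto_mult r1 tendsto_const)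
  then have ev1: "\<forall>\<^sub>F n in sequentially. root n lam * ln lam < ln lam + e"
    using e by (intro order_tendstoD) auto
  have "(\<lambda>n. ln lam / root n lam) \<longlonglongrightarrow> ln lam / 1" by (intro tendsto_divide r1 tendsto_const) auto
  then have ev2: "\<forall>\<^sub>F n in sequentially. ln lam / root n lam > ln lam - e"
    using e by (intro order_tendstoD) auto
  have ev3: "\<forall>\<^sub>F n in sequentially. n > (0::nat)" by (rule eventually_gt_at_top)
  obtain N where N: "\<And>n. n \<ge> N \<Longrightarrow> root n lam * ln lam < ln lam + e \<and> ln lam / root n lam > ln lam - e \<and> n > 0"
    using eventually_conj[OF ev1 eventually_conj[OF ev2 ev3]] unfolding eventually_sequentially by blast
  define n where "n = N"
  have n: "n > 0" "root n lam * ln lam < ln lam + e" "ln lam / root n lam > ln lam - e"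
    using N[of N] by (auto simp: n_def)
  define mu where "mu = root n lam"
  have mu1: "mu > 1" using n lam by (simp add: mu_def)
  have mu0: "mu > 0" using mu1 by simp
  have mun: "mu ^ n = lam" using n lam by (simp add: mu_def)
  have lnmu: "real n * ln mu = ln lam" using ln_root[OF n(1), of lam] n by (simp add: mu_def)
  have lb: "ln mu \<le> mu - 1" "mu - 1 \<le> mu * ln mu" using ln_bounds[OF mu0] by auto
  obtain x0 where x0: "\<And>y. y \<ge> x0 \<Longrightarrow> g y > 0"
    using sv_pos[OF sv] unfolding eventually_at_top_linorder by blast
  define A where "A = (\<lambda>j::nat. \<lambda>t. R g mu (mu ^ j * t) * (g (mu ^ j * t) / g t))"
  have limA: "((\<lambda>t. A j t) \<longlongrightarrow> (1 - 1/mu) * 1) at_top" for j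
    unfolding A_def
    by (intro tendsto_mult tendsto_scale[OF _ R_lim[OF sv Phi mu1]] sv_ratio[OF sv]) (use mu0 in auto)
  have key: "\<forall>\<^sub>F t in at_top. (\<Sum>j<n. A j t) \<le> D t (lam * t) / g t \<and> D t (lam * t) / g t \<le> (\<Sum>j<n. mu * A j t)"
    using eventually_ge_at_top[of "max x0 1"]
  proof eventually_elim
    case (elim t)
    then have t0: "t > 0" and gt: "g t > 0" using x0 by auto
    have tel: "D t (lam * t) / g t = (\<Sum>j<n. D (mu ^ j * t) (mu * (mu ^ j * t)) / g t)"
      unfolding sum_divide_distrib[symmetric] using D_telescope[of mu t n] mun by simp
    have bnd: "A j t \<le> D (mu ^ j * t) (mu * (mu ^ j * t)) / g t \<and>
               D (mu ^ j * t) (mu * (mu ^ j * t)) / g t \<le> mu * A j t" for j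
    proof -
      define y where "y = mu ^ j * t"
      have yt: "y \<ge> t" using pow_ge_self[of mu t j] mu1 t0 by (simp add: y_def)
      have y0: "y > 0" using yt t0 by simp
      have gy: "g y > 0" using x0 yt elim by simp
      have Ry: "R g mu y * g y = y * (V y - V (mu * y))" unfolding R_def using gy by simp
      have Ay: "A j t = y * (V y - V (mu * y)) / g t" unfolding A_def y_def[symmetric] using Ry
        by (metis times_divide_eq_right)
      have d1: "D y (mu * y) \<le> mu * y * (V y - V (mu * y))" "y * (V y - V (mu * y)) \<le> D y (mu * y)"
        using D_block[OF y0] mu1 by auto
      have "A j t \<le> D y (mu * y) / g t" unfolding Ay using d1(2) gt by (intro divide_right_mono) auto
      moreover have "D y (mu * y) / g t \<le> mu * A j t" unfolding Ay
        using d1(1) gt by (simp add: divide_right_mono mult.assoc)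
      ultimately show ?thesis by (simp add: y_def)
    qed
    show ?case unfolding tel using bnd by (auto intro!: sum_mono)
  qed
  have limU: "((\<lambda>t. \<Sum>j<n. mu * A j t) \<longlongrightarrow> (\<Sum>j<n. mu * ((1 - 1/mu) * 1))) at_top"
    by (intro tendsto_sum tendsto_mult tendsto_const limA)
  have limL: "((\<lambda>t. \<Sum>j<n. A j t) \<longlongrightarrow> (\<Sum>j<n. (1 - 1/mu) * 1)) at_top"
    by (intro tendsto_sum limA)
  have U: "(\<Sum>j<n. mu * ((1 - 1/mu) * 1)) = real n * (mu - 1)" using mu0 by (simp add: field_simps)
  have L: "(\<Sum>j<n. (1 - 1/mu) * 1) = real n * (mu - 1) / mu" using mu0 by (simp add: field_simps)
  have "real n * (mu - 1) \<le> real n * (mu * ln mu)" using lb by (intro mult_left_mono) auto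
  also have "\<dots> = mu * ln lam" using lnmu by (simp add: algebra_simps)
  finally have Ub: "real n * (mu - 1) < ln lam + e" using n(2) by (simp add: mu_def mult.commute)
  have "ln lam / mu = real n * ln mu / mu" using lnmu by simp
  also have "\<dots> \<le> real n * (mu - 1) / mu" using lb mu0 by (intro divide_right_mono mult_left_mono) auto
  finally have Lb: "real n * (mu - 1) / mu > ln lam - e" using n(3) by (simp add: mu_def)
  have evU: "\<forall>\<^sub>F t in at_top. (\<Sum>j<n. mu * A j t) < ln lam + e"
    using limU Ub unfolding U by (intro order_tendstoD) auto
  have evL: "\<forall>\<^sub>F t in at_top. (\<Sum>j<n. A j t) > ln lam - e"
    using limL Lb unfolding L by (intro order_tendstoD) auto
  show "\<forall>\<^sub>F t in at_top. D t (lam * t) / g t \<le> ln lam + e"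
    using key evU by eventually_elim auto
  show "\<forall>\<^sub>F t in at_top. D t (lam * t) / g t \<ge> ln lam - e"
    using key evL by eventually_elim auto
qed

lemma B1:
  assumes sv: "slowly_varying g" and Phi: "((\<lambda>x. x * V x / g x) \<longlongrightarrow> 1) at_top"
  shows "\<forall>lam>0. ((\<lambda>t. (real (rho p (lam * t)) - real (rho p t)) / g t) \<longlongrightarrow> ln lam) at_top"
proof (intro allI impI)
  fix lam :: real assume lam: "lam > 0"
  have eqD: "(\<lambda>t. (real (rho p (lam * t)) - real (rho p t)) / g t) = (\<lambda>t. D t (lam * t) / g t)"
    by (simp add: D_def)
  have "((\<lambda>t. D t (lam * t) / g t) \<longlongrightarrow> ln lam) at_top"
  proof (cases "lam > 1")
    case True then show ?thesis using B1_gt1[OF sv Phi] by blast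
  next
    case False
    show ?thesis
    proof (cases "lam = 1")
      case True then show ?thesis by (simp add: D_def)
    next
      case False
      with \<open>\<not> lam > 1\<close> have l1: "lam < 1" by simp
      define c where "c = 1 / lam"
      have c1: "c > 1" using lam l1 by (simp add: c_def)
      have lim1: "((\<lambda>t. D (lam * t) (c * (lam * t)) / g (lam * t)) \<longlongrightarrow> ln c) at_top"
        by (rule tendsto_scale[OF lam B1_gt1[OF sv Phi c1]])
      have lim2: "((\<lambda>t. - (D (lam * t) (c * (lam * t)) / g (lam * t)) * (g (lam * t) / g t)) \<longlongrightarrow> - ln c * 1) at_top"
        by (intro tendsto_intros lim1 sv_ratio[OF sv lam])
      have lc: "- ln c * 1 = ln lam" using lam by (simp add: c_def ln_div)
      have ev: "\<forall>\<^sub>F t in at_top. - (D (lam * t) (c * (lam * t)) / g (lam * t)) * (g (lam * t) / g t) = D t (lam * t) / g t"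
        using eventually_scale[OF lam sv_pos[OF sv]]
      proof eventually_elim
        case (elim t)
        have ct: "c * (lam * t) = t" using lam by (simp add: c_def)
        have "- (D (lam * t) t / g (lam * t)) * (g (lam * t) / g t) = - D (lam * t) t / g t"
          using elim by simp
        also have "\<dots> = D t (lam * t) / g t" by (simp add: D_def)
        finally show ?case unfolding ct .
      qed
      show ?thesis using Lim_transform_eventually[OF lim2 ev] lc by simp
    qed
  qed
  then show "((\<lambda>t. (real (rho p (lam * t)) - real (rho p t)) / g t) \<longlongrightarrow> ln lam) at_top"
    unfolding eqD .
qed

end


context pd begin

lemma V_tel: "V x = (\<Sum>j<N. V (mu ^ j * x) - V (mu * (mu ^ j * x))) + V (mu ^ N * x)"
proof (induction N)
  case 0 then show ?case by simp
next
  case (Suc N)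
  have "mu * (mu ^ N * x) = mu ^ Suc N * x" by (simp add: mult.assoc)
  with Suc show ?case by (simp add: mult.assoc)
qed

lemma B2_lower:
  assumes sv: "slowly_varying g" and hb: "\<And>lam. lam > 0 \<Longrightarrow> ((\<lambda>t. D t (lam * t) / g t) \<longlongrightarrow> ln lam) at_top"
    and e: "e > 0" "e < 1"
  shows "\<forall>\<^sub>F x in at_top. x * V x / g x \<ge> 1 - e"
proof -
  define mu where "mu = 1 + e/2"
  define q where "q = 1 / mu"
  have mu1: "mu > 1" using e by (simp add: mu_def)
  have mu0: "mu > 0" using mu1 by simp
  have q0: "q > 0" "q < 1" using mu1 by (auto simp: q_def)
  obtain N where N: "q ^ N < e/2" using real_arch_pow_inv[of "e/2" q] q0 e by auto
  obtain x0 where x0: "\<And>y. y \<ge> x0 \<Longrightarrow> g y > 0"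
    using sv_pos[OF sv] unfolding eventually_at_top_linorder by blast
  define T where "T = (\<lambda>j::nat. \<lambda>x. D (mu ^ j * x) (mu * (mu ^ j * x)) / g (mu ^ j * x) * (g (mu ^ j * x) / g x) * q ^ (j+1))"
  have limT: "((\<lambda>x. T j x) \<longlongrightarrow> ln mu * 1 * q ^ (j+1)) at_top" for j
    unfolding T_def
    by (intro tendsto_mult tendsto_const sv_ratio[OF sv] tendsto_scale[OF _ hb[OF mu0]]) (use mu0 in auto)
  have limS: "((\<lambda>x. \<Sum>j<N. T j x) \<longlongrightarrow> (\<Sum>j<N. ln mu * 1 * q ^ (j+1))) at_top"
    by (intro tendsto_sum limT)
  have lnmu: "ln mu \<ge> 1 - q"
    using ln_bounds[OF mu0] mu0 by (simp add: q_def field_simps)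
  have "(\<Sum>j<N. (1 - q) * q ^ (j+1)) \<le> (\<Sum>j<N. ln mu * 1 * q ^ (j+1))"
    using lnmu q0 by (intro sum_mono mult_right_mono) auto
  moreover have "(\<Sum>j<N. (1 - q) * q ^ (j+1)) = q - q ^ (N+1)"
  proof -
    have "(\<Sum>j<N. (1 - q) * q ^ (j+1)) = (\<Sum>j<N. q ^ Suc j - q ^ Suc (Suc j))"
      by (intro sum.cong) (auto simp: algebra_simps)
    also have "\<dots> = q ^ Suc 0 - q ^ Suc N"
      by (rule sum_lessThan_telescope'[where f = "\<lambda>j. q ^ Suc j"])
    finally show ?thesis by simp
  qed
  moreover have "q ^ (N+1) \<le> q ^ N" using q0 by (simp add: power_decreasing)
  moreover have "q > 1 - e/2" using e by (simp add: q_def mu_def field_simps)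
  ultimately have lim_gt: "(\<Sum>j<N. ln mu * 1 * q ^ (j+1)) > 1 - e" using N by linarith
  have ev1: "\<forall>\<^sub>F x in at_top. (\<Sum>j<N. T j x) > 1 - e"
    using limS lim_gt by (intro order_tendstoD) auto
  show ?thesis
    using ev1 eventually_ge_at_top[of "max x0 1"]
  proof eventually_elim
    case (elim x)
    then have x0': "x > 0" and gx: "g x > 0" using x0 by auto
    have termb: "T j x \<le> x * (V (mu ^ j * x) - V (mu * (mu ^ j * x))) / g x" for j
    proof -
      define y where "y = mu ^ j * x"
      have yx: "y \<ge> x" using pow_ge_self[of mu x j] mu1 x0' by (simp add: y_def)
      have y0: "y > 0" using yx x0' by simp
      have gy: "g y > 0" using x0 yx elim by simp
      have my: "y \<le> mu * y" using y0 mu1 by simp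
      have vb: "D y (mu * y) / (mu * y) \<le> V y - V (mu * y)" using V_D_bounds(1)[OF y0 my] .
      have qq: "x / (mu * y) = q ^ (j+1)" using mu0 x0' by (simp add: y_def q_def power_divide field_simps)
      have "T j x = D y (mu * y) * q ^ (j+1) / g x" unfolding T_def y_def[symmetric] using gy by simp
      also have "\<dots> = x * (D y (mu * y) / (mu * y)) / g x"
      proof -
        have "x * (D y (mu * y) / (mu * y)) = D y (mu * y) * (x / (mu * y))" by simp
        then show ?thesis using qq by simp
      qed
      also have "\<dots> \<le> x * (V y - V (mu * y)) / g x"
        using vb x0' gx by (intro divide_right_mono mult_left_mono) auto
      finally show ?thesis by (simp add: y_def)
    qed
    have "(\<Sum>j<N. T j x) \<le> (\<Sum>j<N. x * (V (mu ^ j * x) - V (mu * (mu ^ j * x))) / g x)"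
      by (intro sum_mono termb)
    also have "\<dots> = x * (\<Sum>j<N. V (mu ^ j * x) - V (mu * (mu ^ j * x))) / g x"
      by (simp add: sum_divide_distrib[symmetric] sum_distrib_left)
    also have "\<dots> \<le> x * V x / g x"
    proof -
      have "(\<Sum>j<N. V (mu ^ j * x) - V (mu * (mu ^ j * x))) \<le> V x"
        using V_tel[where x=x and N=N and mu=mu] V_nonneg[of "mu ^ N * x"] by linarith
      then show ?thesis using x0' gx by (intro divide_right_mono mult_left_mono) auto
    qed
    finally show ?case using elim by linarith
  qed
qed

lemma B2_const:
  fixes e r :: real
  assumes e: "e > 0" "e < 1" and r: "r = e / 8"
  shows "(ln (1 + r) + r^2) / (1 - (1 + r^2) / (1 + r)) \<le> 1 + e"
proof -
  have r0: "r > 0" "r < 1/8" using e r by auto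
  have ln1: "ln (1 + r) \<le> r" using ln_bounds[of "1 + r"] r0 by simp
  have den: "1 - (1 + r^2) / (1 + r) = (r - r^2) / (1 + r)" using r0 by (simp add: field_simps)
  have rr: "r^2 < r" using r0 by (simp add: power2_eq_square)
  have denp: "(r - r^2) / (1 + r) > 0" using rr r0 by simp
  have "(ln (1 + r) + r^2) / (1 - (1 + r^2) / (1 + r)) \<le> (r + r^2) / ((r - r^2) / (1 + r))"
    unfolding den using ln1 denp by (intro divide_right_mono) auto
  also have "\<dots> = (1 + r)^2 / (1 - r)" using r0 by (simp add: field_simps power2_eq_square)
  also have "\<dots> \<le> 1 + e"
  proof -
    have h: "r * r \<le> (5/9) * r" using mult_right_mono[of r "5/9" r] r0 by simp
    have e8: "e = 8 * r" using r by simp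
    have f1: "(1 + r)^2 = 1 + 2*r + r*r" by (simp add: power2_eq_square algebra_simps)
    have f2: "(1 + e) * (1 - r) = 1 + 7*r - 8*(r*r)" unfolding e8 by (simp add: algebra_simps)
    have "(1 + r)^2 \<le> (1 + e) * (1 - r)"
      unfolding f1 f2 using h by linarith
    then show ?thesis using r0 by (simp add: pos_divide_le_eq)
  qed
  finally show ?thesis .
qed

lemma B2_upper:
  assumes sv: "slowly_varying g" and hb: "\<And>lam. lam > 0 \<Longrightarrow> ((\<lambda>t. D t (lam * t) / g t) \<longlongrightarrow> ln lam) at_top"
    and e: "e > 0" "e < 1"
  shows "\<forall>\<^sub>F x in at_top. x * V x / g x \<le> 1 + e"
proof -
  define r where "r = e / 8"
  define mu where "mu = 1 + r"
  define d where "d = r^2"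
  define rh where "rh = (1 + d) / mu"
  define B where "B = (ln mu + d) / (1 - rh)"
  have r0: "r > 0" "r < 1/8" using e by (auto simp: r_def)
  have mu1: "mu > 1" using r0 by (simp add: mu_def)
  have mu0: "mu > 0" using mu1 by simp
  have d0: "d > 0" using r0 by (simp add: d_def)
  have rr: "r^2 < r" using r0 by (simp add: power2_eq_square)
  have rh0a: "rh > 0" unfolding rh_def using d0 mu0 by simp
  have "1 + d < mu" using rr by (simp add: mu_def d_def)
  then have rh0b: "rh < 1" unfolding rh_def using mu0 by simp
  note rh0 = rh0a rh0b
  have lnpos: "ln mu + d \<ge> 0" using mu1 d0 by simp
  have Bb: "B \<le> 1 + e" unfolding B_def rh_def mu_def d_def by (rule B2_const[OF e r_def])
  have "\<forall>\<^sub>F y in at_top. D y (mu * y) / g y < ln mu + d"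
    using hb[OF mu0] d0 by (intro order_tendstoD) auto
  then obtain x0 where x0: "\<And>y. y \<ge> x0 \<Longrightarrow> D y (mu * y) / g y < ln mu + d"
    unfolding eventually_at_top_linorder by blast
  obtain x1 where x1: "x1 > 0" "\<And>x. x \<ge> x1 \<Longrightarrow> g x > 0 \<and> (\<forall>j::nat. g (mu ^ j * x) \<le> (1 + d) ^ j * g x)"
    using sv_geom[OF sv _ d0, of mu] mu1 by auto
  show ?thesis
    using eventually_ge_at_top[of "max x0 x1"]
  proof eventually_elim
    case (elim x)
    then have xx0: "x \<ge> x0" and xx1: "x \<ge> x1" by auto
    have xp: "x > 0" using xx1 x1 by simp
    have gx: "g x > 0" using x1(2)[OF xx1] by simp
    have termb: "x * (V (mu ^ j * x) - V (mu * (mu ^ j * x))) \<le> (ln mu + d) * g x * rh ^ j" for j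
    proof -
      define y where "y = mu ^ j * x"
      have yx: "y \<ge> x" using pow_ge_self[of mu x j] mu1 xp by (simp add: y_def)
      have y0: "y > 0" using yx xp by simp
      have gy: "g y > 0" using x1(2)[of y] yx xx1 by simp
      have my: "y \<le> mu * y" using y0 mu1 by simp
      have muj: "mu ^ j > 0" using mu0 by simp
      have vb: "V y - V (mu * y) \<le> D y (mu * y) / y" using V_D_bounds(2)[OF y0 my] .
      have Dle: "D y (mu * y) \<le> (ln mu + d) * g y"
        using x0[of y] yx xx0 gy by (simp add: divide_less_eq less_imp_le)
      have gyb: "g y \<le> (1 + d) ^ j * g x" using x1(2)[OF xx1] by (simp add: y_def)
      have "x * (V y - V (mu * y)) \<le> x * (D y (mu * y) / y)" using vb xp by (intro mult_left_mono) auto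
      also have "\<dots> = D y (mu * y) / mu ^ j" using xp mu0 by (simp add: y_def field_simps)
      also have "\<dots> \<le> (ln mu + d) * g y / mu ^ j" using Dle muj by (intro divide_right_mono) auto
      also have "\<dots> \<le> (ln mu + d) * ((1 + d) ^ j * g x) / mu ^ j"
        using gyb lnpos muj by (intro divide_right_mono mult_left_mono) auto
      also have "\<dots> = (ln mu + d) * g x * rh ^ j" by (simp add: rh_def power_divide field_simps)
      finally show ?thesis by (simp add: y_def)
    qed
    have gs: "(\<Sum>j<N. rh ^ j) \<le> 1 / (1 - rh)" for N
    proof -
      have "(\<Sum>j<N. rh ^ j) = (1 - rh ^ N) / (1 - rh)" using rh0 by (simp add: sum_gp_strict)
      also have "\<dots> \<le> 1 / (1 - rh)" using rh0 by (intro divide_right_mono) auto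
      finally show ?thesis .
    qed
    have stepN: "x * V x \<le> B * g x + x * V (mu ^ N * x)" for N
    proof -
      have "x * V x = (\<Sum>j<N. x * (V (mu ^ j * x) - V (mu * (mu ^ j * x)))) + x * V (mu ^ N * x)"
        using V_tel[where x=x and N=N and mu=mu] by (simp add: sum_distrib_left distrib_left)
      also have "(\<Sum>j<N. x * (V (mu ^ j * x) - V (mu * (mu ^ j * x)))) \<le> (\<Sum>j<N. (ln mu + d) * g x * rh ^ j)"
        by (intro sum_mono termb)
      also have "\<dots> = (ln mu + d) * g x * (\<Sum>j<N. rh ^ j)" by (simp add: sum_distrib_left)
      also have "\<dots> \<le> (ln mu + d) * g x * (1 / (1 - rh))"
        using gs lnpos gx by (intro mult_left_mono) auto
      also have "\<dots> = B * g x" by (simp add: B_def)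
      finally show ?thesis by simp
    qed
    have "x * V x \<le> B * g x"
    proof (rule field_le_epsilon)
      fix eps :: real assume eps: "eps > 0"
      have "\<forall>\<^sub>F y in at_top. V y \<le> eps / x" using V_small eps xp by simp
      then obtain Y where Y: "\<And>y. y \<ge> Y \<Longrightarrow> V y \<le> eps / x"
        unfolding eventually_at_top_linorder by blast
      obtain N where N: "Y / x < mu ^ N" using real_arch_pow[OF mu1] by blast
      have "Y \<le> mu ^ N * x" using N xp by (simp add: divide_less_eq less_imp_le)
      then have "V (mu ^ N * x) \<le> eps / x" by (rule Y)
      then have "x * V (mu ^ N * x) \<le> eps" using xp by (simp add: le_divide_eq mult.commute)
      then show "x * V x \<le> B * g x + eps" using stepN[of N] by linarith
    qed
    then have "x * V x / g x \<le> B" using gx by (simp add: divide_le_eq)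
    then show ?case using Bb by linarith
  qed
qed

lemma B2:
  assumes sv: "slowly_varying g"
    and hb0: "\<forall>lam>0. ((\<lambda>t. (real (rho p (lam * t)) - real (rho p t)) / g t) \<longlongrightarrow> ln lam) at_top"
  shows "((\<lambda>x. x * V x / g x) \<longlongrightarrow> 1) at_top"
proof -
  have hb: "((\<lambda>t. D t (lam * t) / g t) \<longlongrightarrow> ln lam) at_top" if "lam > 0" for lam
    using hb0 that unfolding D_def by blast
  show ?thesis
    by (rule tendsto_by_eps1) (use B2_upper[OF sv hb] B2_lower[OF sv hb] in auto)
qed

end

theorem lemma2p3:
  fixes p :: "nat \<Rightarrow> real" and g :: "real \<Rightarrow> real"
  assumes nonneg: "\<forall>k\<ge>1. p k \<ge> 0"
    and prob: "(p has_sum 1) {1..}"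
    and inf_supp: "infinite {k. 1 \<le> k \<and> p k > 0}"
    and sv: "slowly_varying g"
  shows "(\<lambda>t. infsum (\<lambda>k. if p k \<le> t then p k else 0) {1..}) \<sim>[at_right 0] (\<lambda>t. t * g (1 / t))
     \<longleftrightarrow> (\<forall>lam>0. ((\<lambda>t. (real (rho p (lam * t)) - real (rho p t)) / g t) \<longlongrightarrow> ln lam) at_top)"
proof -
  interpret pd p using nonneg prob by unfold_locales
  show ?thesis
    unfolding A1[OF sv] A2[OF sv] using B1[OF sv] B2[OF sv] by blast
qed

end
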